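(* For any real number field $K$ and any $a,b\in K$ with $a>0$ and $b\neq 0$, there exist $x,y,z,u,v,w\in K$ satisfying $$x^2 - ay^2 + au^2 - bv^2 + abw^2 = 0,\qquad z^2 - 4 = au^2,\qquad \mathbb{Q}\left(x,\tfrac{y}{u},z\right) = K,$$ and $$u\neq 0,\quad x + \frac{yz}{2u} > 2,\quad \frac{y}{u}>1,\quad z>2,\quad abw^2 - bv^2 > 4.$$
   Context: A real number field is a field $K\subset\mathbb{R}$ with $[K:\mathbb{Q}]<\infty$. *)

theory Defs
  imports Complex_Main
begin

definition real_subfield :: "real set \<Rightarrow> bool" where
  "real_subfield F \<longleftrightarrow> 0 \<in> F \<and> 1 \<in> F \<and>
     (\<forall>x\<in>F. \<forall>y\<in>F. x + y \<in> F \<and> x * y \<in> F) \<and>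
     (\<forall>x\<in>F. - x \<in> F) \<and> (\<forall>x\<in>F. x \<noteq> 0 \<longrightarrow> inverse x \<in> F)"

text \<open>A real number field: a subfield K of R with [K:Q] finite, i.e. K is spanned
  as a Q-vector space by finitely many of its elements.\<close>
definition real_number_field :: "real set \<Rightarrow> bool" where
  "real_number_field K \<longleftrightarrow> real_subfield K \<and>
     (\<exists>B. finite B \<and> B \<subseteq> K \<and>
        K = {r. \<exists>c. (\<forall>s\<in>B. c s \<in> \<rat>) \<and> r = (\<Sum>s\<in>B. c s * s)})"

definition gen_field :: "real set \<Rightarrow> real set" where
  "gen_field S = \<Inter> {F. real_subfield F \<and> S \<subseteq> F}"

end

theory Submission imports Defs "HOL-Computational_Algebra.Computational_Algebra" "HOL-Computational_Algebra.Field_as_Ring" begin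


section \<open>Subfields\<close>

context fixes F :: "real set" assumes F: "real_subfield F"
begin
lemma rs_0: "0 \<in> F" using F unfolding real_subfield_def by blast
lemma rs_1: "1 \<in> F" using F unfolding real_subfield_def by blast
lemma rs_add: "x \<in> F \<Longrightarrow> y \<in> F \<Longrightarrow> x + y \<in> F" using F unfolding real_subfield_def by blast
lemma rs_mult: "x \<in> F \<Longrightarrow> y \<in> F \<Longrightarrow> x * y \<in> F" using F unfolding real_subfield_def by blast
lemma rs_uminus: "x \<in> F \<Longrightarrow> - x \<in> F" using F unfolding real_subfield_def by blast
lemma rs_inverse: "x \<in> F \<Longrightarrow> inverse x \<in> F"
  using F rs_0 unfolding real_subfield_def by (cases "x = 0") auto
lemma rs_diff: "x \<in> F \<Longrightarrow> y \<in> F \<Longrightarrow> x - y \<in> F"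
  using rs_add[of x "-y"] rs_uminus[of y] by simp
lemma rs_divide: "x \<in> F \<Longrightarrow> y \<in> F \<Longrightarrow> x / y \<in> F"
  using rs_mult[of x "inverse y"] rs_inverse[of y] by (simp add: divide_inverse)
lemma rs_power: "x \<in> F \<Longrightarrow> x ^ n \<in> F"
  by (induction n) (auto intro: rs_1 rs_mult)
lemma rs_of_nat: "of_nat n \<in> F"
  by (induction n) (auto intro: rs_0 rs_1 rs_add)
lemma rs_numeral: "numeral k \<in> F"
  using rs_of_nat[of "numeral k"] by simp
lemma rs_of_int: "of_int n \<in> F"
proof (cases "n \<ge> 0")
  case True then show ?thesis using rs_of_nat[of "nat n"] by simp
next
  case False then show ?thesis using rs_uminus[OF rs_of_nat[of "nat (-n)"]] by simp
qed
lemma rs_Rats: "x \<in> \<rat> \<Longrightarrow> x \<in> F"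
  by (erule Rats_cases') (auto intro: rs_divide rs_of_int)
lemma rs_sum: "(\<And>i. i \<in> A \<Longrightarrow> f i \<in> F) \<Longrightarrow> sum f A \<in> F"
  by (induction A rule: infinite_finite_induct) (auto intro: rs_0 rs_add)
end

lemma real_subfield_UNIV: "real_subfield UNIV" by (simp add: real_subfield_def)

lemma gf_subfield: "real_subfield (gen_field S)"
  unfolding gen_field_def real_subfield_def by blast

lemma gf_sub: "S \<subseteq> gen_field S"
  unfolding gen_field_def by blast

lemma gf_least: "real_subfield F \<Longrightarrow> S \<subseteq> F \<Longrightarrow> gen_field S \<subseteq> F"
  unfolding gen_field_def by blast

lemma gf_mono: "S \<subseteq> T \<Longrightarrow> gen_field S \<subseteq> gen_field T"
  by (meson gf_least gf_sub gf_subfield order_trans)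

lemma gf_union_cong:
  assumes "gen_field B = gen_field C"
  shows "gen_field (A \<union> B) = gen_field (A \<union> C)"
proof -
  have "A \<union> C \<subseteq> gen_field (A \<union> B)"
    using gf_sub[of C] assms gf_mono[of B "A \<union> B"] gf_sub[of "A \<union> B"] by blast
  moreover have "A \<union> B \<subseteq> gen_field (A \<union> C)"
    using gf_sub[of B] assms gf_mono[of C "A \<union> C"] gf_sub[of "A \<union> C"] by blast
  ultimately show ?thesis using gf_least gf_subfield by (metis subset_antisym)
qed

section \<open>Polynomials with coefficients in a subfield\<close>

definition spoly :: "real set \<Rightarrow> real poly \<Rightarrow> bool" where
  "spoly S p \<longleftrightarrow> (\<forall>i. coeff p i \<in> S)"

context fixes F :: "real set" assumes F: "real_subfield F"
begin

lemma spoly_mult: "spoly F p \<Longrightarrow> spoly F q \<Longrightarrow> spoly F (p * q)"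
  unfolding spoly_def using coeff_mult_semiring_closed[of F p q] rs_0[OF F] rs_add[OF F] rs_mult[OF F]
  by blast

lemma spoly_pcompose: "spoly F p \<Longrightarrow> spoly F q \<Longrightarrow> spoly F (pcompose p q)"
  unfolding spoly_def using coeff_pcompose_semiring_closed[of F p q] rs_0[OF F] rs_add[OF F] rs_mult[OF F]
  by blast

lemma spoly_diff: "spoly F p \<Longrightarrow> spoly F q \<Longrightarrow> spoly F (p - q)"
  unfolding spoly_def using rs_diff[OF F] by simp

lemma spoly_pCons: "a \<in> F \<Longrightarrow> spoly F p \<Longrightarrow> spoly F (pCons a p)"
  unfolding spoly_def using rs_0[OF F] by (auto simp: coeff_pCons split: nat.splits)

lemma spoly_0: "spoly F 0"
  unfolding spoly_def using rs_0[OF F] by simp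

lemma spoly_monom: "a \<in> F \<Longrightarrow> spoly F (monom a n)"
  unfolding spoly_def using rs_0[OF F] by (simp add: coeff_monom)

lemma spoly_smult: "a \<in> F \<Longrightarrow> spoly F p \<Longrightarrow> spoly F (smult a p)"
  unfolding spoly_def using rs_mult[OF F] by simp

lemma spoly_pderiv: "spoly F p \<Longrightarrow> spoly F (pderiv p)"
  unfolding spoly_def using rs_mult[OF F] rs_of_nat[OF F] by (metis coeff_pderiv of_nat_Suc)

lemma spoly_Rats: "spoly \<rat> p \<Longrightarrow> spoly F p"
  unfolding spoly_def using rs_Rats[OF F] by blast

lemma spoly_mod: "spoly F p \<Longrightarrow> spoly F q \<Longrightarrow> spoly F (p mod q)"
proof (induction "degree p" arbitrary: p rule: less_induct)
  case less
  show ?case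
  proof (cases "q = 0 \<or> p = 0 \<or> degree p < degree q")
    case True
    then show ?thesis using less.prems spoly_0 by (auto simp: mod_poly_less)
  next
    case False
    then have q0: "q \<noteq> 0" and p0: "p \<noteq> 0" and dg: "degree q \<le> degree p" by auto
    define k where "k = degree p - degree q"
    define r where "r = p - monom (lead_coeff p / lead_coeff q) k * q"
    have lq: "lead_coeff q \<noteq> 0" using q0 by simp
    have sr: "spoly F r" unfolding r_def
      apply (rule spoly_diff[OF less.prems(1)])
      apply (rule spoly_mult[OF spoly_monom less.prems(2)])
      using less.prems unfolding spoly_def by (auto intro: rs_divide[OF F])
    have "degree (monom (lead_coeff p / lead_coeff q) k * q) \<le> degree p"
      by (rule order_trans[OF degree_mult_le]) (use degree_monom_le[of "lead_coeff p / lead_coeff q" k] dg in \<open>simp add: k_def\<close>)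
    then have dr: "degree r \<le> degree p" unfolding r_def
      by (meson degree_diff_le le_refl)
    have "coeff (monom (lead_coeff p / lead_coeff q) k * q) (k + degree q) = lead_coeff p"
      by (simp add: coeff_monom_mult lq q0)
    then have "coeff r (degree p) = 0" unfolding r_def using dg by (simp add: k_def)
    then have "r = 0 \<or> degree r < degree p" using dr
      by (metis le_neq_implies_less leading_coeff_0_iff)
    moreover have "r mod q = p mod q"
    proof -
      have "p = r + monom (lead_coeff p / lead_coeff q) k * q" by (simp add: r_def)
      then show ?thesis by (metis mod_mult_self1)
    qed
    ultimately show ?thesis using less.hyps[of r] sr less.prems(2) spoly_0
      by (metis mod_0)
  qed
qed

lemma spoly_gcd: "spoly F p \<Longrightarrow> spoly F q \<Longrightarrow> spoly F (gcd p q)"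
proof (induction "if q = 0 then 0 else Suc (degree q)" arbitrary: p q rule: less_induct)
  case less
  show ?case
  proof (cases "q = 0")
    case True
    have "gcd p q = smult (inverse (lead_coeff p)) p"
      using True by (simp add: normalize_poly_eq_map_poly smult_conv_map_poly field_simps)
    then show ?thesis using less.prems spoly_smult rs_inverse[OF F] unfolding spoly_def by auto
  next
    case False
    have "gcd p q = gcd q (p mod q)" using False by (simp add: gcd.commute)
    moreover have "spoly F (gcd q (p mod q))"
      apply (rule less.hyps)
      using False degree_mod_less[OF False, of p] less.prems spoly_mod by auto
    ultimately show ?thesis by simp
  qed
qed

end


abbreviation cpoly :: "real poly \<Rightarrow> complex poly" where
  "cpoly p \<equiv> map_poly complex_of_real p"

lemma cp_add: "cpoly (p + q) = cpoly p + cpoly q"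
  by (rule poly_eqI) (simp add: coeff_map_poly)

lemma cp_mult: "cpoly (p * q) = cpoly p * cpoly q"
  by (rule poly_eqI) (simp add: coeff_map_poly coeff_mult)

lemma cp_pCons: "cpoly (pCons a p) = pCons (of_real a) (cpoly p)"
  by (simp add: map_poly_pCons)

lemma cp_poly: "poly (cpoly p) (of_real x) = of_real (poly p x)"
  by (induction p) (simp_all add: cp_pCons)

lemma cp_degree: "degree (cpoly p) = degree p"
  by (rule degree_map_poly) simp

lemma cp_eq0: "cpoly p = 0 \<longleftrightarrow> p = 0"
  by (rule map_poly_eq_0_iff) auto

lemma cp_pcompose: "cpoly (pcompose p q) = pcompose (cpoly p) (cpoly q)"
  by (induction p) (simp_all add: cp_pCons pcompose_pCons cp_add cp_mult)

lemma simple_root_aux: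
  fixes r k :: "real poly"
  assumes "poly r b = 0"
  shows "poly (pderiv (r * (r * k))) b = 0"
  using assms by (simp add: pderiv_mult)

lemma prim2:
  fixes \<alpha> \<beta> :: real
  assumes f: "spoly \<rat> f" "f \<noteq> 0" "poly f \<alpha> = 0"
    and g0: "spoly \<rat> g0" "g0 \<noteq> 0" "poly g0 \<beta> = 0"
  shows "\<exists>c\<in>\<rat>. gen_field {\<alpha>, \<beta>} = gen_field {\<alpha> + c * \<beta>}"
proof -
  define P where "P d \<longleftrightarrow> (\<exists>g. spoly \<rat> g \<and> g \<noteq> 0 \<and> poly g \<beta> = 0 \<and> degree g = d)" for d
  have "P (degree g0)" using g0 unfolding P_def by blast
  then have "P (LEAST d. P d)" by (rule LeastI)
  then obtain g where g: "spoly \<rat> g" "g \<noteq> 0" "poly g \<beta> = 0" "degree g = (LEAST d. P d)"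
    unfolding P_def by blast
  have gmin: "degree g \<le> degree g'" if "spoly \<rat> g'" "g' \<noteq> 0" "poly g' \<beta> = 0" for g'
    unfolding g(4) by (rule Least_le) (use that in \<open>auto simp: P_def\<close>)
  have RQ: "real_subfield \<rat>"
    unfolding real_subfield_def by auto
  define r where "r = [:-\<beta>, 1:]"
  have simple: "\<not> (r * r) dvd g"
  proof
    assume "(r * r) dvd g"
    then obtain k where gk: "g = r * r * k" by (auto elim: dvdE)
    have "degree g \<noteq> 0"
    proof
      assume "degree g = 0"
      then obtain a where "g = [:a:]" using degree0_coeffs by blast
      then show False using g(2,3) by (metis poly_const_conv pCons_eq_0_iff)
    qed
    then have pd0: "pderiv g \<noteq> 0" by (simp add: pderiv_eq_0_iff)
    have "degree (pderiv g) < degree g" using \<open>degree g \<noteq> 0\<close> by (simp add: degree_pderiv)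
    moreover have "spoly \<rat> (pderiv g)" using spoly_pderiv[OF RQ g(1)] .
    moreover have "poly (pderiv g) \<beta> = 0"
    proof -
      have "poly r \<beta> = 0" by (simp add: r_def)
      from simple_root_aux[OF this, of k] show ?thesis unfolding gk by (simp add: mult.assoc)
    qed
    ultimately show False using gmin[of "pderiv g"] pd0 by linarith
  qed
  define RF where "RF = {z. poly (cpoly f) z = 0}"
  define RG where "RG = {z. poly (cpoly g) z = 0}"
  have fRF: "finite RF" unfolding RF_def
    by (rule poly_roots_finite) (use f(2) cp_eq0 in auto)
  have fRG: "finite RG" unfolding RG_def
    by (rule poly_roots_finite) (use g(2) cp_eq0 in auto)
  define Bad where "Bad = (\<lambda>(a', \<rho>). (a' - complex_of_real \<alpha>) / (complex_of_real \<beta> - \<rho>)) ` (RF \<times> RG)"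
  have fBad: "finite Bad" unfolding Bad_def using fRF fRG by simp
  have "finite (of_nat -` Bad :: nat set)"
    by (rule finite_vimageI[OF fBad]) (simp add: inj_on_def)
  then obtain k :: nat where k: "k \<notin> of_nat -` Bad"
    using ex_new_if_finite[OF infinite_UNIV_nat] by blast
  define c where "c = real k"
  define \<gamma> where "\<gamma> = \<alpha> + c * \<beta>"
  define S where "S = gen_field {\<gamma>}"
  have SF: "real_subfield S" unfolding S_def by (rule gf_subfield)
  have \<gamma>S: "\<gamma> \<in> S" unfolding S_def using gf_sub by blast
  have cS: "c \<in> S" unfolding c_def by (rule rs_of_nat[OF SF])
  define h where "h = pcompose f [:\<gamma>, -c:]"
  have sh: "spoly S h" unfolding h_def
    by (rule spoly_pcompose[OF SF spoly_Rats[OF SF f(1)]])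
      (intro spoly_pCons[OF SF] spoly_0[OF SF] \<gamma>S rs_uminus[OF SF] cS)
  have hb: "poly h \<beta> = 0" unfolding h_def by (simp add: poly_pcompose \<gamma>_def f(3))
  define D where "D = gcd g h"
  have sD: "spoly S D" unfolding D_def by (rule spoly_gcd[OF SF spoly_Rats[OF SF g(1)] sh])
  have "r dvd D" unfolding D_def r_def
    using g(3) hb by (simp add: poly_eq_0_iff_dvd)
  then obtain E where DE: "D = r * E" by (auto elim: dvdE)
  have D0: "D \<noteq> 0" unfolding D_def using g(2) by simp
  have Dg: "D dvd g" and Dh: "D dvd h" unfolding D_def by simp_all
  have dE: "degree E = 0"
  proof (rule ccontr)
    assume "degree E \<noteq> 0"
    then have "\<not> constant (poly (cpoly E))" by (simp add: constant_degree cp_degree)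
    then obtain \<rho> where \<rho>: "poly (cpoly E) \<rho> = 0" using fundamental_theorem_of_algebra by blast
    have zero_of: "poly (cpoly q) \<rho> = 0" if "D dvd q" for q
    proof -
      from that obtain G where "q = r * E * G" using DE by (auto elim: dvdE)
      then have "cpoly q = cpoly r * cpoly E * cpoly G" by (simp add: cp_mult)
      then show ?thesis using \<rho> by simp
    qed
    show False
    proof (cases "\<rho> = of_real \<beta>")
      case True
      then have "poly E \<beta> = 0" using \<rho> cp_poly[of E \<beta>] by simp
      then have "r dvd E" unfolding r_def by (simp add: poly_eq_0_iff_dvd)
      then have "r * r dvd D" unfolding DE by simp
      then show False using simple Dg dvd_trans by blast
    next
      case False
      have \<rho>G: "\<rho> \<in> RG" unfolding RG_def using zero_of[OF Dg] by simp
      have "poly (cpoly h) \<rho> = 0" using zero_of[OF Dh] .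
      then have "poly (cpoly f) (of_real \<gamma> - of_real c * \<rho>) = 0"
        unfolding h_def cp_pcompose by (simp add: poly_pcompose cp_pCons) (metis mult.commute)
      then have aF: "of_real \<gamma> - of_real c * \<rho> \<in> RF" unfolding RF_def by simp
      have nz: "complex_of_real \<beta> - \<rho> \<noteq> 0" using False by simp
      have "(of_real \<gamma> - of_real c * \<rho> - complex_of_real \<alpha>) / (complex_of_real \<beta> - \<rho>) = of_real c"
      proof -
        have "of_real \<gamma> - of_real c * \<rho> - complex_of_real \<alpha> = of_real c * (complex_of_real \<beta> - \<rho>)"
          by (simp add: \<gamma>_def algebra_simps)
        then show ?thesis using nz by simp
      qed
      then have "of_real c \<in> Bad" unfolding Bad_def using aF \<rho>G
        by (intro image_eqI[where x="(of_real \<gamma> - of_real c * \<rho>, \<rho>)"]) auto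
      then show False using k unfolding c_def by simp
    qed
  qed
  then obtain e where Ee: "E = [:e:]" by (meson degree0_coeffs)
  have e0: "e \<noteq> 0" using D0 DE Ee by auto
  have c0: "coeff D 0 = - \<beta> * e" and c1: "coeff D 1 = e" unfolding DE Ee r_def by simp_all
  have m1: "- \<beta> * e \<in> S" using sD c0 unfolding spoly_def by metis
  have m2: "e \<in> S" using sD c1 unfolding spoly_def by metis
  have "(- \<beta> * e) / e \<in> S" by (rule rs_divide[OF SF m1 m2])
  then have "- \<beta> \<in> S" using e0 by simp
  then have \<beta>S: "\<beta> \<in> S" using rs_uminus[OF SF, of "- \<beta>"] by simp
  have "\<gamma> - c * \<beta> \<in> S" by (rule rs_diff[OF SF \<gamma>S rs_mult[OF SF cS \<beta>S]])
  then have \<alpha>S: "\<alpha> \<in> S" by (simp add: \<gamma>_def)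
  have 1: "gen_field {\<alpha>, \<beta>} \<subseteq> S" by (rule gf_least[OF SF]) (use \<alpha>S \<beta>S in auto)
  have T: "real_subfield (gen_field {\<alpha>, \<beta>})" by (rule gf_subfield)
  have "\<alpha> \<in> gen_field {\<alpha>, \<beta>}" "\<beta> \<in> gen_field {\<alpha>, \<beta>}" using gf_sub[of "{\<alpha>,\<beta>}"] by auto
  then have "\<gamma> \<in> gen_field {\<alpha>, \<beta>}"
    unfolding \<gamma>_def c_def by (intro rs_add[OF T] rs_mult[OF T] rs_of_nat[OF T])
  then have 2: "S \<subseteq> gen_field {\<alpha>, \<beta>}" unfolding S_def by (intro gf_least[OF T]) auto
  have "gen_field {\<alpha>, \<beta>} = gen_field {\<alpha> + c * \<beta>}" using 1 2 unfolding S_def \<gamma>_def by blast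
  moreover have "c \<in> \<rat>" unfolding c_def by simp
  ultimately show ?thesis by blast
qed



global_interpretation Qv: vector_space "\<lambda>(q::rat) (x::real). of_rat q * x"
  by unfold_locales (auto simp: of_rat_add of_rat_mult algebra_simps)

definition Alg :: "real \<Rightarrow> bool" where
  "Alg x \<longleftrightarrow> (\<exists>p. spoly \<rat> p \<and> p \<noteq> 0 \<and> poly p x = 0)"

lemma alg_span:
  assumes fB: "finite B" and pw: "\<And>n. x ^ n \<in> Qv.span B"
  shows "Alg x"
proof (cases "inj_on (\<lambda>k. x ^ k) {0..card B}")
  case False
  then obtain i j where ij: "i \<noteq> j" "x ^ i = x ^ j" unfolding inj_on_def by blast
  define p :: "real poly" where "p = monom 1 j - monom 1 i"
  have "spoly \<rat> p" unfolding spoly_def p_def by (auto simp: coeff_monom)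
  moreover have "p \<noteq> 0"
  proof
    assume "p = 0"
    then have "coeff p j = 0" by simp
    then show False using ij(1) by (simp add: p_def coeff_monom)
  qed
  moreover have "poly p x = 0" using ij by (simp add: p_def poly_monom)
  ultimately show ?thesis unfolding Alg_def by blast
next
  case True
  define P where "P = (\<lambda>k. x ^ k) ` {0..card B}"
  have cP: "card P = Suc (card B)" unfolding P_def using True by (simp add: card_image)
  have "P \<subseteq> Qv.span B" unfolding P_def using pw by auto
  then have "\<not> Qv.independent P" using Qv.independent_span_bound[OF fB, of P] cP by auto
  then obtain t u where t: "finite t" "t \<subseteq> P" "(\<Sum>v\<in>t. of_rat (u v) * v) = 0" "\<exists>v\<in>t. u v \<noteq> 0"
    unfolding Qv.dependent_explicit by blast
  define T where "T = {k\<in>{0..card B}. x ^ k \<in> t}"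
  have tT: "t = (\<lambda>k. x ^ k) ` T" using t(2) unfolding T_def P_def by auto
  have injT: "inj_on (\<lambda>k. x ^ k) T" using True unfolding T_def by (rule inj_on_subset) auto
  have fT: "finite T" unfolding T_def by simp
  define p :: "real poly" where "p = (\<Sum>k\<in>T. monom (of_rat (u (x ^ k))) k)"
  have cp: "coeff p j = (if j \<in> T then of_rat (u (x ^ j)) else 0)" for j
    unfolding p_def coeff_sum coeff_monom using fT by (simp add: sum.delta)
  have "spoly \<rat> p" unfolding spoly_def cp by simp
  moreover have "p \<noteq> 0"
  proof -
    obtain v where v: "v \<in> t" "u v \<noteq> 0" using t(4) by blast
    then obtain j where j: "j \<in> T" "v = x ^ j" using tT by auto
    have "coeff p j \<noteq> 0" using j v by (simp add: cp)
    then show ?thesis by auto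
  qed
  moreover have "poly p x = 0"
  proof -
    have "poly p x = (\<Sum>k\<in>T. of_rat (u (x ^ k)) * x ^ k)"
      unfolding p_def by (simp add: poly_sum poly_monom)
    also have "\<dots> = (\<Sum>v\<in>t. of_rat (u v) * v)"
      unfolding tT by (simp add: sum.reindex[OF injT])
    finally show ?thesis using t(3) by simp
  qed
  ultimately show ?thesis unfolding Alg_def by blast
qed

lemma prim_fin:
  assumes K: "real_subfield K" and alg: "\<And>x. x \<in> K \<Longrightarrow> Alg x"
  shows "finite B \<Longrightarrow> B \<subseteq> K \<Longrightarrow> \<exists>\<theta>. gen_field B = gen_field {\<theta>}"
proof (induction B rule: finite_induct)
  case empty
  have "0 \<in> gen_field {}" by (rule rs_0[OF gf_subfield])
  then have "gen_field {0} \<subseteq> gen_field {}" by (intro gf_least[OF gf_subfield]) auto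
  moreover have "gen_field {} \<subseteq> gen_field {0}" by (rule gf_mono) auto
  ultimately show ?case by blast
next
  case (insert b B)
  then obtain \<theta> where th: "gen_field B = gen_field {\<theta>}" by auto
  have "\<theta> \<in> K" using th gf_sub[of "{\<theta>}"] gf_least[OF K, of B] insert.prems by auto
  then obtain f where f: "spoly \<rat> f" "f \<noteq> 0" "poly f \<theta> = 0" using alg unfolding Alg_def by blast
  obtain g where g: "spoly \<rat> g" "g \<noteq> 0" "poly g b = 0" using alg insert.prems unfolding Alg_def by blast
  obtain c where c: "gen_field {\<theta>, b} = gen_field {\<theta> + c * b}" using prim2[OF f g] by blast
  have "gen_field (insert b B) = gen_field ({b} \<union> B)" by simp
  also have "\<dots> = gen_field ({b} \<union> {\<theta>})" by (rule gf_union_cong[OF th])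
  also have "{b} \<union> {\<theta>} = {\<theta>, b}" by auto
  finally show ?case using c by blast
qed

lemma primitive_element:
  assumes "real_number_field K"
  shows "\<exists>\<theta>\<in>K. K = gen_field {\<theta>}"
proof -
  have K: "real_subfield K" using assms unfolding real_number_field_def by blast
  obtain B where B: "finite B" "B \<subseteq> K"
    "K = {r. \<exists>c. (\<forall>s\<in>B. c s \<in> \<rat>) \<and> r = (\<Sum>s\<in>B. c s * s)}"
    using assms unfolding real_number_field_def by blast
  have KS: "K = Qv.span B"
  proof
    show "K \<subseteq> Qv.span B"
    proof
      fix r assume "r \<in> K"
      then obtain c where c: "\<forall>s\<in>B. c s \<in> \<rat>" "r = (\<Sum>s\<in>B. c s * s)" using B(3) by blast
      define u where "u s = inv of_rat (c s)" for s
      have "of_rat (u s) = c s" if "s \<in> B" for s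
        unfolding u_def using c(1) that by (simp add: Rats_def f_inv_into_f)
      then have "r = (\<Sum>s\<in>B. of_rat (u s) * s)" using c(2) by simp
      then show "r \<in> Qv.span B" unfolding Qv.span_finite[OF B(1)] by blast
    qed
  next
    show "Qv.span B \<subseteq> K"
    proof
      fix r assume "r \<in> Qv.span B"
      then obtain u where "r = (\<Sum>s\<in>B. of_rat (u s) * s)" unfolding Qv.span_finite[OF B(1)] by blast
      then show "r \<in> K" using B(3) by (auto intro!: exI[of _ "\<lambda>s. of_rat (u s)"])
    qed
  qed
  have alg: "Alg x" if "x \<in> K" for x
    by (rule alg_span[OF B(1)]) (use that rs_power[OF K] KS in auto)
  obtain \<theta> where th: "gen_field B = gen_field {\<theta>}" using prim_fin[OF K alg B(1,2)] by blast
  have "gen_field B \<subseteq> K" by (rule gf_least[OF K B(2)])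
  moreover have "K \<subseteq> gen_field B"
  proof
    fix r assume "r \<in> K"
    then obtain c where c: "\<forall>s\<in>B. c s \<in> \<rat>" "r = (\<Sum>s\<in>B. c s * s)" using B(3) by blast
    have G: "real_subfield (gen_field B)" by (rule gf_subfield)
    show "r \<in> gen_field B" unfolding c(2)
      by (rule rs_sum[OF G], rule rs_mult[OF G]) (use c(1) rs_Rats[OF G] gf_sub[of B] in auto)
  qed
  ultimately have "K = gen_field {\<theta>}" using th by blast
  moreover have "\<theta> \<in> K" using gf_sub[of "{\<theta>}"] \<open>K = gen_field {\<theta>}\<close> by auto
  ultimately show ?thesis by blast
qed



theorem theorem3p1:
  fixes K :: "real set" and a b :: real
  assumes "real_number_field K" and "a \<in> K" and "b \<in> K" and "a > 0" and "b \<noteq> 0"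
  shows "\<exists>x y z u v w.
           x \<in> K \<and> y \<in> K \<and> z \<in> K \<and> u \<in> K \<and> v \<in> K \<and> w \<in> K \<and>
           x^2 - a * y^2 + a * u^2 - b * v^2 + a * b * w^2 = 0 \<and>
           z^2 - 4 = a * u^2 \<and>
           gen_field {x, y / u, z} = K \<and>
           u \<noteq> 0 \<and> x + y * z / (2 * u) > 2 \<and> y / u > 1 \<and> z > 2 \<and>
           a * b * w^2 - b * v^2 > 4"
proof -
  note aK = assms(2) and bK = assms(3) and a0 = assms(4) and b0 = assms(5)
  have KF: "real_subfield K" using assms(1) unfolding real_number_field_def by blast
  obtain \<theta> where thK: "\<theta> \<in> K" and Kth: "K = gen_field {\<theta>}"
    using primitive_element[OF assms(1)] by blast
  obtain N :: nat where N: "1 / a < real N" using reals_Archimedean2 by blast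
  have N1: "real N \<ge> 1"
  proof -
    have "1 / a > 0" using a0 by simp
    then have "real N > 0" using N by linarith
    then show ?thesis by simp
  qed
  have "a * real N > 1" using N a0 by (simp add: field_simps)
  moreover have "a * real N \<le> a * (real N)^2" using N1 a0 by (simp add: power2_eq_square)
  ultimately have A1: "a * (real N)^2 > 1" by linarith
  define A where "A = a * (real N)^2"
  have A1': "A - 1 > 0" using A1 unfolding A_def by simp
  define z where "z = 2 * (A + 1) / (A - 1)"
  define u where "u = 4 * real N / (A - 1)"
  have u0: "u > 0" unfolding u_def using A1' N1 by simp
  have z2: "z > 2" unfolding z_def using A1' by (simp add: field_simps)
  have zu: "z^2 - 4 = a * u^2"
  proof -
    have h: "(A - 1)^2 \<noteq> 0" using A1' by simp
    have "z^2 - 4 = (4 * (A + 1)^2 - 4 * (A - 1)^2) / (A - 1)^2"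
      unfolding z_def using h by (simp add: power_divide power_mult_distrib diff_divide_distrib) (simp add: power2_eq_square algebra_simps)
    also have "\<dots> = 16 * A / (A - 1)^2" by (simp add: power2_eq_square algebra_simps)
    finally have "z^2 - 4 = 16 * A / (A - 1)^2" .
    also have "\<dots> = a * u^2" unfolding u_def A_def using A1'
      by (simp add: field_simps power2_eq_square)
    finally show ?thesis .
  qed
  define c where "c = (if b > 0 then a * b else - b)"
  have c0: "c > 0" unfolding c_def using a0 b0 by auto
  obtain M :: nat where M: "2 * c / a < real M" using reals_Archimedean2 by blast
  have "2 * c / a > 0" using c0 a0 by simp
  then have M1: "real M > 0" using M by linarith
  define m where "m = 1 / real M"
  have m0: "m > 0" unfolding m_def using M1 by simp
  have cm: "c * m^2 < a / 2"
  proof -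
    have "c * m^2 = c / (real M)^2" unfolding m_def by (simp add: power2_eq_square)
    also have "\<dots> \<le> c / real M"
    proof -
      have "M \<ge> 1" using M1 by simp
      then have "real M \<le> (real M)^2" by (simp add: power2_eq_square)
      then show ?thesis using c0 M1 by (intro divide_left_mono) auto
    qed
    also have "\<dots> < a / 2" using M c0 a0 M1 by (simp add: field_simps)
    finally show ?thesis .
  qed
  define L where "L = a - c * m^2"
  have L0: "L > 0" unfolding L_def using cm a0 by simp
  define E where "E = c * m^2 * a^2 * u^2"
  have E0: "E > 0" unfolding E_def using c0 m0 a0 u0 by simp
  define D0 where "D0 = min (2 * a) (sqrt E / 2)"
  have D00: "D0 > 0" unfolding D0_def using a0 E0 by simp
  have "sqrt L - \<theta> < sqrt (L + D0) - \<theta>" using D00 L0 by simp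
  then obtain q where q: "q \<in> \<rat>" "sqrt L - \<theta> < q" "q < sqrt (L + D0) - \<theta>"
    using Rats_dense_in_real by blast
  define n where "n = \<theta> + q"
  have n1: "sqrt L < n" and n2: "n < sqrt (L + D0)" using q unfolding n_def by auto
  have n0: "n > 0" using n1 real_sqrt_ge_zero[of L] L0 by linarith
  have nL: "n^2 > L"
  proof -
    have "(sqrt L)^2 < n^2" using n1 real_sqrt_ge_zero[of L] L0 by (intro power_strict_mono) auto
    then show ?thesis using L0 by simp
  qed
  have nL2: "n^2 < L + D0"
  proof -
    have "n^2 < (sqrt (L + D0))^2" using n2 n0 by (intro power_strict_mono) auto
    then show ?thesis using L0 D00 by simp
  qed
  define D where "D = n^2 + c * m^2 - a"
  have D0p: "D > 0" and DD0: "D < D0" using nL nL2 unfolding D_def L_def by auto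
  define lam where "lam = 2 * a / D"
  have lam1: "lam > 1"
  proof -
    have "D < 2 * a" using DD0 unfolding D0_def by simp
    then show ?thesis unfolding lam_def using D0p by (simp add: field_simps)
  qed
  define p where "p = lam * u"
  have p0: "p > 0" unfolding p_def using lam1 u0 by simp
  define y where "y = u + p"
  define x where "x = n * p"
  define W where "W = m * p"
  define v where "v = (if b > 0 then 0 else W)"
  define w where "w = (if b > 0 then W else 0)"
  have vw: "a * b * w^2 - b * v^2 = c * W^2" unfolding v_def w_def c_def by auto
  have pD: "p * D = 2 * a * u" unfolding p_def lam_def using D0p by simp
  have eq: "x^2 - a * y^2 + a * u^2 - b * v^2 + a * b * w^2 = 0"
  proof -
    have "x^2 - a * y^2 + a * u^2 - b * v^2 + a * b * w^2 = x^2 - a * y^2 + a * u^2 + c * W^2"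
      using vw by simp
    also have "\<dots> = p * (p * D - 2 * a * u)"
      unfolding x_def y_def W_def D_def by (simp add: power2_eq_square algebra_simps)
    also have "\<dots> = 0" using pD by simp
    finally show ?thesis .
  qed
  have yu: "y / u = 1 + lam" unfolding y_def p_def using u0 by (simp add: field_simps)
  have x0: "x > 0" unfolding x_def using n0 p0 by simp
  have ineq1: "x + y * z / (2 * u) > 2"
  proof -
    have "y * z / (2 * u) = (y / u) * z / 2" by simp
    also have "\<dots> = (1 + lam) * z / 2" using yu by simp
    also have "\<dots> > (1 + lam) * 2 / 2" using z2 lam1 by (intro divide_strict_right_mono mult_strict_left_mono) auto
    finally show ?thesis using x0 lam1 by simp
  qed
  have ineq2: "a * b * w^2 - b * v^2 > 4"
  proof -
    have "D < sqrt E / 2" using DD0 unfolding D0_def by simp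
    then have "D^2 < (sqrt E / 2)^2" using D0p by (intro power_strict_mono) auto
    also have "\<dots> = E / 4" using E0 by (simp add: power_divide)
    finally have DE: "4 * D^2 < E" by simp
    have "c * W^2 = 4 * E / D^2"
      unfolding W_def p_def lam_def E_def using D0p by (simp add: power2_eq_square field_simps)
    also have "\<dots> > 4" using DE D0p zero_le_power2[of D] by (simp add: field_simps, linarith)
    finally show ?thesis using vw by simp
  qed
  have NK: "real N \<in> K" by (rule rs_of_nat[OF KF])
  have AK: "A \<in> K" unfolding A_def using NK aK by (intro rs_mult[OF KF] rs_power[OF KF])
  have uK: "u \<in> K" unfolding u_def
    by (intro rs_divide[OF KF] rs_mult[OF KF] rs_of_nat[OF KF] rs_diff[OF KF] AK rs_1[OF KF] rs_numeral[OF KF])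
  have zK: "z \<in> K" unfolding z_def
    by (intro rs_divide[OF KF] rs_mult[OF KF] rs_add[OF KF] rs_diff[OF KF] AK rs_1[OF KF] rs_of_nat[OF KF])
       (simp add: rs_of_nat[OF KF, of 2, simplified])
  have cK: "c \<in> K" unfolding c_def using rs_mult[OF KF aK bK] rs_uminus[OF KF bK] by simp
  have mK: "m \<in> K" unfolding m_def by (intro rs_divide[OF KF] rs_1[OF KF] rs_of_nat[OF KF])
  have nK: "n \<in> K" unfolding n_def by (intro rs_add[OF KF] thK rs_Rats[OF KF q(1)])
  have DK: "D \<in> K" unfolding D_def
    by (intro rs_diff[OF KF] rs_add[OF KF] rs_mult[OF KF] rs_power[OF KF] nK cK mK aK)
  have lK: "lam \<in> K" unfolding lam_def
    by (intro rs_divide[OF KF] rs_mult[OF KF] aK DK) (simp add: rs_of_nat[OF KF, of 2, simplified])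
  have pK: "p \<in> K" unfolding p_def by (intro rs_mult[OF KF] lK uK)
  have yK: "y \<in> K" unfolding y_def by (intro rs_add[OF KF] uK pK)
  have xK: "x \<in> K" unfolding x_def by (intro rs_mult[OF KF] nK pK)
  have WK: "W \<in> K" unfolding W_def by (intro rs_mult[OF KF] mK pK)
  have vK: "v \<in> K" unfolding v_def using WK rs_0[OF KF] by simp
  have wK: "w \<in> K" unfolding w_def using WK rs_0[OF KF] by simp
  define G where "G = gen_field {x, y / u, z}"
  have GF: "real_subfield G" unfolding G_def by (rule gf_subfield)
  have xG: "x \<in> G" and tG: "y / u \<in> G" and zG: "z \<in> G" unfolding G_def using gf_sub[of "{x, y / u, z}"] by auto
  have zm: "z - 2 = 4 / (A - 1)" unfolding z_def using A1' by (simp add: field_simps)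
  have zp: "z + 2 = 4 * A / (A - 1)" unfolding z_def using A1' by (simp add: field_simps)
  have Az: "A = (z + 2) / (z - 2)" unfolding zm zp using A1' by simp
  have AG: "A \<in> G" unfolding Az
    by (intro rs_divide[OF GF] rs_add[OF GF] rs_diff[OF GF] zG) (simp_all add: rs_of_nat[OF GF, of 2, simplified])
  have uG: "u \<in> G" unfolding u_def
    by (intro rs_divide[OF GF] rs_mult[OF GF] rs_of_nat[OF GF] rs_diff[OF GF] AG rs_1[OF GF] rs_numeral[OF GF])
  have "lam = y / u - 1" using yu by simp
  then have lG: "lam \<in> G" using rs_diff[OF GF tG rs_1[OF GF]] by simp
  have pG: "p \<in> G" unfolding p_def by (intro rs_mult[OF GF] lG uG)
  have "n = x / p" unfolding x_def using p0 by simp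
  then have nG: "n \<in> G" using rs_divide[OF GF xG pG] by simp
  have "\<theta> = n - q" unfolding n_def by simp
  then have thG: "\<theta> \<in> G" using rs_diff[OF GF nG rs_Rats[OF GF q(1)]] by simp
  have "K \<subseteq> G" unfolding Kth by (rule gf_least[OF GF]) (use thG in auto)
  moreover have "G \<subseteq> K" unfolding G_def by (rule gf_least[OF KF]) (use xK yK uK zK rs_divide[OF KF yK uK] in auto)
  ultimately have gen: "gen_field {x, y / u, z} = K" unfolding G_def by blast
  have yu1: "y / u > 1" using yu lam1 by simp
  have un: "u \<noteq> 0" using u0 by simp
  show ?thesis
    apply (rule exI[of _ x], rule exI[of _ y], rule exI[of _ z], rule exI[of _ u], rule exI[of _ v], rule exI[of _ w])
    apply (intro conjI)
    by (fact xK yK zK uK vK wK eq zu gen un ineq1 yu1 z2 ineq2)+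
qed

end
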